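(* Let $S$ be a square-free semigroup, $D$ a division ring, and let $(\alpha,\xi),(\beta,\zeta)\in Z^2(S,D^* )$ be 2-cocycles. If $[\beta,\zeta]=[\alpha^{\phi},\xi^{\phi}]$ in the thin 2-cohomology for some $\phi\in\mathrm{Aut}(S)$, then $D^{\beta}_{\zeta}S\cong D^{\alpha}_{\xi}S$ as rings. Consequently, for each $(\alpha,\xi)\in Z^2(S,D^* )$ there exists a normal $(\beta,\zeta)\in Z^2(S,D^* )$ with $D^{\beta}_{\zeta}S\cong D^{\alpha}_{\xi}S$.
   Context: $D$ is a division ring, $D^*$ its group of units, $\mathrm{Aut}(D)$ its group of ring automorphisms, and for $d\in D^*$, $\rho_d\in\mathrm{Aut}(D)$ is $\rho_d(x)=dxd^{-1}$. A square-free semigroup is a semigroup $S$ (product written $s\cdot t$) with zero $\theta$ together with a finite set $E\subseteq S$ of nonzero pairwise orthogonal idempotents such that $S=\bigcup_{e,f\in E}e\cdot S\cdot f$ and $|e\cdot S\cdot f\setminus\{\theta\}|\le 1$ for all $e,f\in E$. Write $S^*=S\setminus\{\theta\}$; each $s\in S^*$ satisfies $s=e\cdot s\cdot f$ for unique $e,f\in E$. $\mathrm{Aut}(S)$ is the group of semigroup automorphisms of $S$. Put $S^{<0>}=E$ and $S^{<n>}=\{(s_1,\dots,s_n)\in S^n: s_1\cdot s_2\cdots s_n\neq\theta\}$ for $n>0$; for a group $G$, $F^n(S,G)$ is the group (under pointwise multiplication) of functions $S^{<n>}\to G$. For $\alpha\in F^1(S,\mathrm{Aut}(D))$ and $\mu\in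 F^0(S,\mathrm{Aut}(D))$ write $\alpha_s=\alpha(s)$, $\mu_e=\mu(e)$. A 2-cocycle is a pair $(\alpha,\xi)\in F^1(S,\mathrm{Aut}(D))\times F^2(S,D^* )$ with $\alpha_s(\xi(t,u))\,\xi(s,t\cdot u)=\xi(s,t)\,\xi(s\cdot t,u)$ for all $(s,t,u)\in S^{<3>}$ and $\alpha_s\circ\alpha_t=\rho_{\xi(s,t)}\circ\alpha_{s\cdot t}$ for all $(s,t)\in S^{<2>}$; $Z^2(S,D^* )$ is the set of 2-cocycles. A 2-cocycle is normal if $\alpha_e=1_D$ and $\xi(e,e)=1$ for all $e\in E$. The group $F^0(S,\mathrm{Aut}(D))\ltimes F^1(S,D^* )$ acts on $Z^2(S,D^* )$ by $(\mu,\eta)*(\alpha,\xi)=(\beta,\zeta)$ where, for $s=e\cdot s\cdot f$, $t=f\cdot t\cdot g$ in $S^*$ with $s\cdot t\ne\theta$: $\mu_e\circ\beta_s\circ\mu_f^{-1}=\rho_{\eta(s)}\circ\alpha_s$ and $\mu_e(\zeta(s,t))=\eta(s)\,\alpha_s(\eta(t))\,\xi(s,t)\,\eta(s\cdot t)^{-1}$. The orbits form the thin 2-cohomology; $[\alpha,\xi]$ denotes the orbit of $(\alpha,\xi)$. For $\phi\in\mathrm{Aut}(S)$ define $(\alpha^{\phi},\xi^{\phi})$ by $\alpha^{\phi}_s=\alpha_{\phi(s)}$ and $\xi^{\phi}(s,t)=\xi(\phi(s),\phi(t))$. For $(\alpha,\xi)\in Z^2(S,D^* )$, $D^{\alpha}_{\xi}S$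 is the ring which is the left $D$-vector space with basis $S^*$ and multiplication extended by distributivity from $(d_1s)(d_2t)=d_1\,\alpha_s(d_2)\,\xi(s,t)\,(s\cdot t)$ if $s\cdot t\neq\theta$ and $0$ otherwise ($d_1,d_2\in D$, $s,t\in S^*$); in particular $sd=\alpha_s(d)s$ and $st=\xi(s,t)\,s\cdot t$. *)

theory Defs
  imports Main
begin

definition square_free_semigroup ::
  "'s set \<Rightarrow> ('s \<Rightarrow> 's \<Rightarrow> 's) \<Rightarrow> 's \<Rightarrow> 's set \<Rightarrow> bool" where
  "square_free_semigroup S m \<theta> E \<longleftrightarrow>
     (\<forall>s\<in>S. \<forall>t\<in>S. m s t \<in> S) \<and>
     (\<forall>s\<in>S. \<forall>t\<in>S. \<forall>u\<in>S. m (m s t) u = m s (m t u)) \<and>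
     \<theta> \<in> S \<and> (\<forall>s\<in>S. m \<theta> s = \<theta> \<and> m s \<theta> = \<theta>) \<and>
     E \<subseteq> S \<and> finite E \<and>
     (\<forall>e\<in>E. e \<noteq> \<theta> \<and> m e e = e) \<and>
     (\<forall>e\<in>E. \<forall>f\<in>E. e \<noteq> f \<longrightarrow> m e f = \<theta>) \<and>
     S = (\<Union>e\<in>E. \<Union>f\<in>E. {m (m e x) f | x. x \<in> S}) \<and>
     (\<forall>e\<in>E. \<forall>f\<in>E. card ({m (m e x) f | x. x \<in> S} - {\<theta>}) \<le> 1 \<and>
                      finite ({m (m e x) f | x. x \<in> S} - {\<theta>}))"

definition semigroup_aut ::
  "'s set \<Rightarrow> ('s \<Rightarrow> 's \<Rightarrow> 's) \<Rightarrow> ('s \<Rightarrow> 's) \<Rightarrow> bool" where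
  "semigroup_aut S m \<phi> \<longleftrightarrow> bij_betw \<phi> S S \<and> (\<forall>s\<in>S. \<forall>t\<in>S. \<phi> (m s t) = m (\<phi> s) (\<phi> t))"

definition ring_aut :: "('d::division_ring \<Rightarrow> 'd) \<Rightarrow> bool" where
  "ring_aut \<sigma> \<longleftrightarrow> bij \<sigma> \<and> (\<forall>x y. \<sigma> (x + y) = \<sigma> x + \<sigma> y) \<and> (\<forall>x y. \<sigma> (x * y) = \<sigma> x * \<sigma> y)"

definition rho :: "'d::division_ring \<Rightarrow> 'd \<Rightarrow> 'd" where
  "rho d = (\<lambda>x. d * x * inverse d)"

(* 2-cocycles (alpha, xi) in Z^2(S, D^* ); alpha is relevant on S^<1> = S - {theta},
   xi on S^<2> *)
definition cocycle2 ::
  "'s set \<Rightarrow> ('s \<Rightarrow> 's \<Rightarrow> 's) \<Rightarrow> 's \<Rightarrow> ('s \<Rightarrow> 'd::division_ring \<Rightarrow> 'd) \<Rightarrow> ('s \<Rightarrow> 's \<Rightarrow> 'd) \<Rightarrow> bool" where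
  "cocycle2 S m \<theta> \<alpha> \<xi> \<longleftrightarrow>
     (\<forall>s\<in>S. s \<noteq> \<theta> \<longrightarrow> ring_aut (\<alpha> s)) \<and>
     (\<forall>s\<in>S. \<forall>t\<in>S. m s t \<noteq> \<theta> \<longrightarrow> \<xi> s t \<noteq> 0) \<and>
     (\<forall>s\<in>S. \<forall>t\<in>S. \<forall>u\<in>S. m (m s t) u \<noteq> \<theta> \<longrightarrow>
         \<alpha> s (\<xi> t u) * \<xi> s (m t u) = \<xi> s t * \<xi> (m s t) u) \<and>
     (\<forall>s\<in>S. \<forall>t\<in>S. m s t \<noteq> \<theta> \<longrightarrow> \<alpha> s \<circ> \<alpha> t = rho (\<xi> s t) \<circ> \<alpha> (m s t))"

definition normal_cocycle ::
  "'s set \<Rightarrow> ('s \<Rightarrow> 'd::division_ring \<Rightarrow> 'd) \<Rightarrow> ('s \<Rightarrow> 's \<Rightarrow> 'd) \<Rightarrow> bool" where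
  "normal_cocycle E \<alpha> \<xi> \<longleftrightarrow> (\<forall>e\<in>E. \<alpha> e = id \<and> \<xi> e e = 1)"

(* (mu, eta) * (alpha, xi) = (beta, zeta) *)
definition cohom_act ::
  "'s set \<Rightarrow> ('s \<Rightarrow> 's \<Rightarrow> 's) \<Rightarrow> 's \<Rightarrow> 's set \<Rightarrow>
   ('s \<Rightarrow> 'd::division_ring \<Rightarrow> 'd) \<Rightarrow> ('s \<Rightarrow> 'd) \<Rightarrow>
   ('s \<Rightarrow> 'd \<Rightarrow> 'd) \<Rightarrow> ('s \<Rightarrow> 's \<Rightarrow> 'd) \<Rightarrow>
   ('s \<Rightarrow> 'd \<Rightarrow> 'd) \<Rightarrow> ('s \<Rightarrow> 's \<Rightarrow> 'd) \<Rightarrow> bool" where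
  "cohom_act S m \<theta> E \<mu> \<eta> \<alpha> \<xi> \<beta> \<zeta> \<longleftrightarrow>
     (\<forall>e\<in>E. ring_aut (\<mu> e)) \<and>
     (\<forall>s\<in>S. s \<noteq> \<theta> \<longrightarrow> \<eta> s \<noteq> 0) \<and>
     (\<forall>s\<in>S. \<forall>e\<in>E. \<forall>f\<in>E. s \<noteq> \<theta> \<and> m (m e s) f = s \<longrightarrow>
         \<mu> e \<circ> \<beta> s \<circ> inv (\<mu> f) = rho (\<eta> s) \<circ> \<alpha> s) \<and>
     (\<forall>s\<in>S. \<forall>t\<in>S. \<forall>e\<in>E. \<forall>f\<in>E. \<forall>g\<in>E.
         m (m e s) f = s \<and> m (m f t) g = t \<and> s \<noteq> \<theta> \<and> t \<noteq> \<theta> \<and> m s t \<noteq> \<theta> \<longrightarrow>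
         \<mu> e (\<zeta> s t) = \<eta> s * \<alpha> s (\<eta> t) * \<xi> s t * inverse (\<eta> (m s t)))"

definition thin_cohomologous ::
  "'s set \<Rightarrow> ('s \<Rightarrow> 's \<Rightarrow> 's) \<Rightarrow> 's \<Rightarrow> 's set \<Rightarrow>
   ('s \<Rightarrow> 'd::division_ring \<Rightarrow> 'd) \<Rightarrow> ('s \<Rightarrow> 's \<Rightarrow> 'd) \<Rightarrow>
   ('s \<Rightarrow> 'd \<Rightarrow> 'd) \<Rightarrow> ('s \<Rightarrow> 's \<Rightarrow> 'd) \<Rightarrow> bool" where
  "thin_cohomologous S m \<theta> E \<beta> \<zeta> \<alpha> \<xi> \<longleftrightarrow>
     (\<exists>\<mu> \<eta>. cohom_act S m \<theta> E \<mu> \<eta> \<alpha> \<xi> \<beta> \<zeta>)"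

(* The ring D^alpha_xi S: elements are D-linear combinations of S^* = S - {theta},
   represented as coefficient functions vanishing off S^* (S is finite). *)
definition twisted_carrier :: "'s set \<Rightarrow> 's \<Rightarrow> ('s \<Rightarrow> 'd::division_ring) set" where
  "twisted_carrier S \<theta> = {x. \<forall>u. (u \<notin> S \<or> u = \<theta>) \<longrightarrow> x u = 0}"

definition twisted_add :: "('s \<Rightarrow> 'd::division_ring) \<Rightarrow> ('s \<Rightarrow> 'd) \<Rightarrow> ('s \<Rightarrow> 'd)" where
  "twisted_add x y = (\<lambda>u. x u + y u)"

definition twisted_mult ::
  "'s set \<Rightarrow> ('s \<Rightarrow> 's \<Rightarrow> 's) \<Rightarrow> 's \<Rightarrow> ('s \<Rightarrow> 'd::division_ring \<Rightarrow> 'd) \<Rightarrow> ('s \<Rightarrow> 's \<Rightarrow> 'd) \<Rightarrow>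
   ('s \<Rightarrow> 'd) \<Rightarrow> ('s \<Rightarrow> 'd) \<Rightarrow> ('s \<Rightarrow> 'd)" where
  "twisted_mult S m \<theta> \<alpha> \<xi> x y =
     (\<lambda>u. if u \<in> S \<and> u \<noteq> \<theta> then
        (\<Sum>s\<in>S - {\<theta>}. \<Sum>t\<in>S - {\<theta>}. if m s t = u then x s * \<alpha> s (y t) * \<xi> s t else 0)
      else 0)"

definition twisted_rings_iso ::
  "'s set \<Rightarrow> ('s \<Rightarrow> 's \<Rightarrow> 's) \<Rightarrow> 's \<Rightarrow>
   ('s \<Rightarrow> 'd::division_ring \<Rightarrow> 'd) \<Rightarrow> ('s \<Rightarrow> 's \<Rightarrow> 'd) \<Rightarrow>
   ('s \<Rightarrow> 'd \<Rightarrow> 'd) \<Rightarrow> ('s \<Rightarrow> 's \<Rightarrow> 'd) \<Rightarrow> bool" where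
  "twisted_rings_iso S m \<theta> \<beta> \<zeta> \<alpha> \<xi> \<longleftrightarrow>
     (\<exists>h. bij_betw h (twisted_carrier S \<theta>) (twisted_carrier S \<theta>) \<and>
        (\<forall>x\<in>twisted_carrier S \<theta>. \<forall>y\<in>twisted_carrier S \<theta>.
           h (twisted_add x y) = twisted_add (h x) (h y) \<and>
           h (twisted_mult S m \<theta> \<beta> \<zeta> x y) = twisted_mult S m \<theta> \<alpha> \<xi> (h x) (h y)))"

end

theory Submission
  imports Defs
begin



lemma cancel1: "(a::'d::division_ring) \<noteq> 0 \<Longrightarrow> a * (inverse a * y) = y"
  by (simp add: mult.assoc[symmetric])
lemma cancel2: "(a::'d::division_ring) \<noteq> 0 \<Longrightarrow> inverse a * (a * y) = y"
  by (simp add: mult.assoc[symmetric])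

lemma ra_add: "ring_aut \<sigma> \<Longrightarrow> \<sigma> (x + y) = \<sigma> x + \<sigma> y" unfolding ring_aut_def by blast
lemma ra_mult: "ring_aut \<sigma> \<Longrightarrow> \<sigma> (x * y) = \<sigma> x * \<sigma> y" unfolding ring_aut_def by blast
lemma ra_bij: "ring_aut \<sigma> \<Longrightarrow> bij \<sigma>" unfolding ring_aut_def by blast
lemma ra_0: "ring_aut \<sigma> \<Longrightarrow> \<sigma> 0 = 0"
proof -
  assume a: "ring_aut \<sigma>"
  have "\<sigma> (0 + 0) = \<sigma> 0 + \<sigma> 0" using ra_add[OF a] .
  then show ?thesis by simp
qed
lemma ra_inj: "ring_aut \<sigma> \<Longrightarrow> \<sigma> x = \<sigma> y \<longleftrightarrow> x = y"
  using ra_bij bij_is_inj inj_eq by metis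
lemma ra_ne0: "ring_aut \<sigma> \<Longrightarrow> x \<noteq> 0 \<Longrightarrow> \<sigma> x \<noteq> 0"
  using ra_inj ra_0 by metis
lemma ra_invf: "ring_aut \<sigma> \<Longrightarrow> inv \<sigma> (\<sigma> x) = x"
  using ra_bij bij_is_inj inv_f_f by metis
lemma ra_finv: "ring_aut \<sigma> \<Longrightarrow> \<sigma> (inv \<sigma> x) = x"
  using ra_bij bij_is_surj surj_f_inv_f by metis
lemma ra_1: assumes a: "ring_aut \<sigma>" shows "\<sigma> 1 = (1::'d::division_ring)"
proof -
  obtain z where z: "\<sigma> z = 1" using ra_finv[OF a] by metis
  have "\<sigma> (1 * z) = \<sigma> 1 * \<sigma> z" using ra_mult[OF a] .
  then show ?thesis using z by simp
qed
lemma ra_inverse: assumes a: "ring_aut \<sigma>" shows "\<sigma> (inverse x) = inverse (\<sigma> (x::'d::division_ring))"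
proof (cases "x = 0")
  case True then show ?thesis using ra_0[OF a] by simp
next
  case False
  have "\<sigma> x * \<sigma> (inverse x) = 1" using ra_mult[OF a, of x "inverse x"] ra_1[OF a] False by simp
  then show ?thesis using ra_ne0[OF a False]
    by (metis inverse_unique)
qed
lemma ra_sum: assumes a: "ring_aut \<sigma>" shows "\<sigma> (sum f A) = (\<Sum>x\<in>A. \<sigma> (f x))"
proof (cases "finite A")
  case True then show ?thesis by (induction A rule: finite_induct) (simp_all add: ra_0[OF a] ra_add[OF a])
next
  case False then show ?thesis using ra_0[OF a] by simp
qed

lemma ra_id: "ring_aut id" unfolding ring_aut_def by simp

lemma ra_conj: assumes a: "ring_aut \<sigma>" and d: "(d::'d::division_ring) \<noteq> 0"
  shows "ring_aut (\<lambda>x. d * \<sigma> x * inverse d)"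
proof -
  have "bij (\<lambda>x. d * \<sigma> x * inverse d)"
  proof (rule bij_betw_byWitness[where f'="\<lambda>y. inv \<sigma> (inverse d * y * d)"])
    show "\<forall>a\<in>UNIV. inv \<sigma> (inverse d * (d * \<sigma> a * inverse d) * d) = a"
      using d ra_invf[OF a] by (simp add: mult.assoc cancel2)
    show "\<forall>a'\<in>UNIV. d * \<sigma> (inv \<sigma> (inverse d * a' * d)) * inverse d = a'"
      using d ra_finv[OF a] by (simp add: mult.assoc cancel1)
  qed auto
  moreover have "\<forall>x y. d * \<sigma> (x + y) * inverse d = d * \<sigma> x * inverse d + d * \<sigma> y * inverse d"
    by (simp add: ra_add[OF a] algebra_simps)
  moreover have "\<forall>x y. d * \<sigma> (x * y) * inverse d = (d * \<sigma> x * inverse d) * (d * \<sigma> y * inverse d)"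
    using d by (simp add: ra_mult[OF a] mult.assoc cancel2)
  ultimately show ?thesis unfolding ring_aut_def by blast
qed




locale sfs =
  fixes S :: "'s set" and m :: "'s \<Rightarrow> 's \<Rightarrow> 's" and \<theta> :: 's and E :: "'s set"
  assumes sf: "square_free_semigroup S m \<theta> E"
begin

lemma P1: "\<forall>s\<in>S. \<forall>t\<in>S. m s t \<in> S"
  using sf unfolding square_free_semigroup_def by (elim conjE) assumption
lemma P2: "\<forall>s\<in>S. \<forall>t\<in>S. \<forall>u\<in>S. m (m s t) u = m s (m t u)"
  using sf unfolding square_free_semigroup_def by (elim conjE) assumption
lemma thS: "\<theta> \<in> S"
  using sf unfolding square_free_semigroup_def by (elim conjE) assumption
lemma P4: "\<forall>s\<in>S. m \<theta> s = \<theta> \<and> m s \<theta> = \<theta>"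
  using sf unfolding square_free_semigroup_def by (elim conjE) assumption
lemma P5: "E \<subseteq> S"
  using sf unfolding square_free_semigroup_def by (elim conjE) assumption
lemma P6: "\<forall>e\<in>E. e \<noteq> \<theta> \<and> m e e = e"
  using sf unfolding square_free_semigroup_def by (elim conjE) assumption
lemma P7: "\<forall>e\<in>E. \<forall>f\<in>E. e \<noteq> f \<longrightarrow> m e f = \<theta>"
  using sf unfolding square_free_semigroup_def by (elim conjE) assumption
lemma P8: "S = (\<Union>e\<in>E. \<Union>f\<in>E. {m (m e x) f | x. x \<in> S})"
  using sf unfolding square_free_semigroup_def by (elim conjE) assumption

lemma cl: "s \<in> S \<Longrightarrow> t \<in> S \<Longrightarrow> m s t \<in> S"
  using P1 by blast
lemma assoc: "s \<in> S \<Longrightarrow> t \<in> S \<Longrightarrow> u \<in> S \<Longrightarrow> m (m s t) u = m s (m t u)"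
  using P2 by blast
lemma zl: "s \<in> S \<Longrightarrow> m \<theta> s = \<theta>"
  using P4 by blast
lemma zr: "s \<in> S \<Longrightarrow> m s \<theta> = \<theta>"
  using P4 by blast
lemma ES: "e \<in> E \<Longrightarrow> e \<in> S"
  using P5 by blast
lemma Ene: "e \<in> E \<Longrightarrow> e \<noteq> \<theta>"
  using P6 by blast
lemma idem: "e \<in> E \<Longrightarrow> m e e = e"
  using P6 by blast
lemma orth: "e \<in> E \<Longrightarrow> f \<in> E \<Longrightarrow> e \<noteq> f \<Longrightarrow> m e f = \<theta>"
  using P7 by blast
lemma dec: assumes "s \<in> S" shows "\<exists>e\<in>E. \<exists>f\<in>E. \<exists>x\<in>S. s = m (m e x) f"
proof -
  have "s \<in> (\<Union>e\<in>E. \<Union>f\<in>E. {m (m e x) f | x. x \<in> S})" using P8 assms by simp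
  then show ?thesis by blast
qed

lemma ends: assumes "s \<in> S" shows "\<exists>e\<in>E. \<exists>f\<in>E. m (m e s) f = s"
proof -
  obtain e f x where e: "e \<in> E" and f: "f \<in> E" and x: "x \<in> S" and s: "s = m (m e x) f"
    using dec[OF assms] by blast
  have eS: "e \<in> S" and fS: "f \<in> S" using e f ES by auto
  have ex: "m e x \<in> S" using eS x cl by blast
  have "m e s = m e (m (m e x) f)" using s by simp
  also have "\<dots> = m (m e (m e x)) f" using assoc[OF eS ex fS] by simp
  also have "\<dots> = m (m (m e e) x) f" using assoc[OF eS eS x] by simp
  also have "\<dots> = s" using s idem[OF e] by simp
  finally have 1: "m e s = s" .
  have "m s f = m (m e x) (m f f)" using s assoc[OF ex fS fS] by simp
  also have "\<dots> = s" using s idem[OF f] by simp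
  finally have "m s f = s" .
  then have "m (m e s) f = s" using 1 by simp
  then show ?thesis using e f by blast
qed

lemma absl: assumes "s \<in> S" "e \<in> E" "f \<in> E" "m (m e s) f = s" shows "m e s = s"
proof -
  have eS: "e \<in> S" and fS: "f \<in> S" using assms ES by auto
  have es: "m e s \<in> S" using eS assms(1) cl by blast
  have "m e s = m e (m (m e s) f)" using assms(4) by simp
  also have "\<dots> = m (m e (m e s)) f" using assoc[OF eS es fS] by simp
  also have "\<dots> = m (m (m e e) s) f" using assoc[OF eS eS assms(1)] by simp
  also have "\<dots> = s" using idem[OF assms(2)] assms(4) by simp
  finally show ?thesis .
qed

lemma absr: assumes "s \<in> S" "e \<in> E" "f \<in> E" "m (m e s) f = s" shows "m s f = s"
proof -
  have eS: "e \<in> S" and fS: "f \<in> S" using assms ES by auto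
  have es: "m e s \<in> S" using eS assms(1) cl by blast
  have "m s f = m (m (m e s) f) f" using assms(4) by simp
  also have "\<dots> = m (m e s) (m f f)" using assoc[OF es fS fS] by simp
  also have "\<dots> = s" using idem[OF assms(3)] assms(4) by simp
  finally show ?thesis .
qed

lemma uniql: assumes "s \<in> S" "s \<noteq> \<theta>" "e \<in> E" "f \<in> E" "m (m e s) f = s"
  "e' \<in> E" "f' \<in> E" "m (m e' s) f' = s" shows "e = e'"
proof (rule ccontr)
  assume ne: "e \<noteq> e'"
  have eS: "e \<in> S" "e' \<in> S" using assms ES by auto
  have a1: "m e s = s" using absl[OF assms(1,3,4,5)] .
  have a2: "m e' s = s" using absl[OF assms(1,6,7,8)] .
  have "s = m e' (m e s)" using a1 a2 by simp
  also have "\<dots> = m (m e' e) s" using assoc[OF eS(2) eS(1) assms(1)] by simp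
  also have "\<dots> = \<theta>" using orth[OF assms(6,3)] ne zl[OF assms(1)] by simp
  finally show False using assms(2) by simp
qed

lemma uniqr: assumes "s \<in> S" "s \<noteq> \<theta>" "e \<in> E" "f \<in> E" "m (m e s) f = s"
  "e' \<in> E" "f' \<in> E" "m (m e' s) f' = s" shows "f = f'"
proof (rule ccontr)
  assume ne: "f \<noteq> f'"
  have eS: "f \<in> S" "f' \<in> S" using assms ES by auto
  have a1: "m s f = s" using absr[OF assms(1,3,4,5)] .
  have a2: "m s f' = s" using absr[OF assms(1,6,7,8)] .
  have "s = m (m s f) f'" using a1 a2 by simp
  also have "\<dots> = m s (m f f')" using assoc[OF assms(1) eS] by simp
  also have "\<dots> = \<theta>" using orth[OF assms(4,7)] ne zr[OF assms(1)] by simp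
  finally show False using assms(2) by simp
qed

lemma prod_ends: assumes "s \<in> S" "t \<in> S" "m s t \<noteq> \<theta>" "e \<in> E" "f \<in> E" "m (m e s) f = s"
  "f' \<in> E" "g \<in> E" "m (m f' t) g = t"
  shows "f = f'" "m (m e (m s t)) g = m s t"
proof -
  have eS: "e \<in> S" "f \<in> S" "f' \<in> S" "g \<in> S" using assms ES by auto
  have a1: "m e s = s" "m s f = s" using absl[OF assms(1,4,5,6)] absr[OF assms(1,4,5,6)] by auto
  have a2: "m f' t = t" "m t g = t" using absl[OF assms(2,7,8,9)] absr[OF assms(2,7,8,9)] by auto
  show "f = f'"
  proof (rule ccontr)
    assume ne: "f \<noteq> f'"
    have "m s t = m (m s f) (m f' t)" using a1 a2 by simp
    also have "\<dots> = m s (m f (m f' t))" using assoc[OF assms(1) eS(2) cl[OF eS(3) assms(2)]] by simp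
    also have "\<dots> = m s (m (m f f') t)" using assoc[OF eS(2,3) assms(2)] by simp
    also have "\<dots> = \<theta>" using orth[OF assms(5,7)] ne zl[OF assms(2)] zr[OF assms(1)] by simp
    finally show False using assms(3) by simp
  qed
  have "m (m e (m s t)) g = m (m (m e s) t) g" using assoc[OF eS(1) assms(1,2)] by simp
  also have "\<dots> = m s t" using a1 assoc[OF assms(1,2) eS(4)] a2 by simp
  finally show "m (m e (m s t)) g = m s t" .
qed

lemma prod_ne: assumes "s \<in> S" "t \<in> S" "m s t \<noteq> \<theta>" shows "s \<noteq> \<theta>" "t \<noteq> \<theta>"
  using assms zl zr by auto

definition lid where "lid s = (SOME e. e \<in> E \<and> (\<exists>f\<in>E. m (m e s) f = s))"
definition rid where "rid s = (SOME f. f \<in> E \<and> (\<exists>e\<in>E. m (m e s) f = s))"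

lemma lid: assumes "s \<in> S" shows "lid s \<in> E" "\<exists>f\<in>E. m (m (lid s) s) f = s"
proof -
  have "\<exists>e. e \<in> E \<and> (\<exists>f\<in>E. m (m e s) f = s)" using ends[OF assms] by blast
  from someI_ex[OF this] show "lid s \<in> E" "\<exists>f\<in>E. m (m (lid s) s) f = s"
    unfolding lid_def by auto
qed

lemma rid: assumes "s \<in> S" shows "rid s \<in> E" "m (m (lid s) s) (rid s) = s"
proof -
  have "\<exists>f. f \<in> E \<and> (\<exists>e\<in>E. m (m e s) f = s)" using ends[OF assms] by blast
  from someI_ex[OF this] have r: "rid s \<in> E" "\<exists>e\<in>E. m (m e s) (rid s) = s"
    unfolding rid_def by auto
  show "rid s \<in> E" by fact
  show "m (m (lid s) s) (rid s) = s"
  proof (cases "s = \<theta>")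
    case True then show ?thesis using zr[OF ES[OF lid(1)[OF assms]]] zl[OF ES[OF r(1)]] by simp
  next
    case False
    obtain e where e: "e \<in> E" "m (m e s) (rid s) = s" using r by blast
    obtain f where f: "f \<in> E" "m (m (lid s) s) f = s" using lid[OF assms] by blast
    have "e = lid s" using uniql[OF assms False e(1) r(1) e(2) lid(1)[OF assms] f] .
    then show ?thesis using e by simp
  qed
qed

lemma lid_eq: assumes "s \<in> S" "s \<noteq> \<theta>" "e \<in> E" "f \<in> E" "m (m e s) f = s" shows "lid s = e"
  using uniql[OF assms(1,2) lid(1)[OF assms(1)] rid(1)[OF assms(1)] rid(2)[OF assms(1)] assms(3-5)] .

lemma rid_eq: assumes "s \<in> S" "s \<noteq> \<theta>" "e \<in> E" "f \<in> E" "m (m e s) f = s" shows "rid s = f"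
  using uniqr[OF assms(1,2) lid(1)[OF assms(1)] rid(1)[OF assms(1)] rid(2)[OF assms(1)] assms(3-5)] .

lemma prod_lid: assumes "s \<in> S" "t \<in> S" "m s t \<noteq> \<theta>"
  shows "lid t = rid s" "lid (m s t) = lid s" 
proof -
  note ne = prod_ne[OF assms]
  note pe = prod_ends[OF assms lid(1)[OF assms(1)] rid(1)[OF assms(1)] rid(2)[OF assms(1)]
       lid(1)[OF assms(2)] rid(1)[OF assms(2)] rid(2)[OF assms(2)]]
  show "lid t = rid s" using pe(1) by simp
  show "lid (m s t) = lid s"
    using lid_eq[OF cl[OF assms(1,2)] assms(3) lid(1)[OF assms(1)] rid(1)[OF assms(2)] pe(2)] .
qed

end



context sfs begin

lemma iso_core:
  fixes \<alpha> \<beta> :: "'s \<Rightarrow> 'd::division_ring \<Rightarrow> 'd" and \<xi> \<zeta> :: "'s \<Rightarrow> 's \<Rightarrow> 'd"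
  assumes A: "\<And>s. s\<in>S \<Longrightarrow> s\<noteq>\<theta> \<Longrightarrow> ring_aut (\<alpha> s)"
  and M: "\<And>e. e\<in>E \<Longrightarrow> ring_aut (\<mu> e)"
  and N: "\<And>s. s\<in>S \<Longrightarrow> s\<noteq>\<theta> \<Longrightarrow> \<eta> s \<noteq> 0"
  and C1: "\<And>s e f. s\<in>S \<Longrightarrow> e\<in>E \<Longrightarrow> f\<in>E \<Longrightarrow> s\<noteq>\<theta> \<Longrightarrow> m (m e s) f = s \<Longrightarrow>
      \<mu> e \<circ> \<beta> s \<circ> inv (\<mu> f) = rho (\<eta> s) \<circ> \<alpha> s"
  and C2: "\<And>s t e f g. s\<in>S \<Longrightarrow> t\<in>S \<Longrightarrow> e\<in>E \<Longrightarrow> f\<in>E \<Longrightarrow> g\<in>E \<Longrightarrow> m (m e s) f = s \<Longrightarrow>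
      m (m f t) g = t \<Longrightarrow> s\<noteq>\<theta> \<Longrightarrow> t\<noteq>\<theta> \<Longrightarrow> m s t \<noteq> \<theta> \<Longrightarrow>
      \<mu> e (\<zeta> s t) = \<eta> s * \<alpha> s (\<eta> t) * \<xi> s t * inverse (\<eta> (m s t))"
  shows "twisted_rings_iso S m \<theta> \<beta> \<zeta> \<alpha> \<xi>"
proof -
  have keyl: "\<mu> (lid (m s t)) (a * \<beta> s b * \<zeta> s t) * \<eta> (m s t)
       = (\<mu> (lid s) a * \<eta> s) * \<alpha> s (\<mu> (lid t) b * \<eta> t) * \<xi> s t"
    if s: "s \<in> S" and t: "t \<in> S" and st: "m s t \<noteq> \<theta>" for s t a b
  proof -
    note ne = prod_ne[OF s t st]
    define e where "e = lid s"
    define f where "f = rid s"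
    define g where "g = rid t"
    have eE: "e \<in> E" and fE: "f \<in> E" and gE: "g \<in> E" using lid rid s t unfolding e_def f_def g_def by auto
    have lt: "lid t = f" and lu: "lid (m s t) = e" using prod_lid[OF s t st] unfolding e_def f_def by auto
    have es: "m (m e s) f = s" using rid[OF s] unfolding e_def f_def by simp
    have ft: "m (m f t) g = t" using rid[OF t] lt unfolding g_def by simp
    have c1: "\<mu> e (\<beta> s b) = \<eta> s * \<alpha> s (\<mu> f b) * inverse (\<eta> s)"
    proof -
      have "(\<mu> e \<circ> \<beta> s \<circ> inv (\<mu> f)) (\<mu> f b) = (rho (\<eta> s) \<circ> \<alpha> s) (\<mu> f b)"
        using C1[OF s eE fE ne(1) es] by simp
      then show ?thesis using ra_invf[OF M[OF fE]] unfolding rho_def by simp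
    qed
    have c2: "\<mu> e (\<zeta> s t) = \<eta> s * \<alpha> s (\<eta> t) * \<xi> s t * inverse (\<eta> (m s t))"
      using C2[OF s t eE fE gE es ft ne st] .
    have nu: "\<eta> (m s t) \<noteq> 0" using N[OF cl[OF s t] st] .
    have ns: "\<eta> s \<noteq> 0" using N[OF s ne(1)] .
    have "\<mu> (lid (m s t)) (a * \<beta> s b * \<zeta> s t) * \<eta> (m s t)
        = \<mu> e a * (\<eta> s * \<alpha> s (\<mu> f b) * inverse (\<eta> s)) * (\<eta> s * \<alpha> s (\<eta> t) * \<xi> s t * inverse (\<eta> (m s t))) * \<eta> (m s t)"
      unfolding lu using ra_mult[OF M[OF eE]] c1 c2 by simp
    also have "\<dots> = \<mu> e a * \<eta> s * (\<alpha> s (\<mu> f b) * \<alpha> s (\<eta> t)) * \<xi> s t"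
      using nu ns by (simp add: mult.assoc cancel2)
    also have "\<dots> = (\<mu> (lid s) a * \<eta> s) * \<alpha> s (\<mu> (lid t) b * \<eta> t) * \<xi> s t"
      unfolding lt e_def using ra_mult[OF A[OF s ne(1)]] by simp
    finally show ?thesis .
  qed
  define C where "C = (twisted_carrier S \<theta> :: ('s \<Rightarrow> 'd) set)"
  define h where "h = (\<lambda>(x::'s \<Rightarrow> 'd) u. if u \<in> S \<and> u \<noteq> \<theta> then \<mu> (lid u) (x u) * \<eta> u else 0)"
  define g where "g = (\<lambda>(y::'s \<Rightarrow> 'd) u. if u \<in> S \<and> u \<noteq> \<theta> then inv (\<mu> (lid u)) (y u * inverse (\<eta> u)) else 0)"
  have Cm: "x \<in> C \<longleftrightarrow> (\<forall>u. (u \<notin> S \<or> u = \<theta>) \<longrightarrow> x u = 0)" for x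
    unfolding C_def twisted_carrier_def by simp
  have bij: "bij_betw h C C"
  proof (rule bij_betw_byWitness[where f'=g])
    show "\<forall>a\<in>C. g (h a) = a"
    proof
      fix x assume x: "x \<in> C"
      show "g (h x) = x"
      proof
        fix u show "g (h x) u = x u"
        proof (cases "u \<in> S \<and> u \<noteq> \<theta>")
          case True
          then show ?thesis unfolding g_def h_def
            using N[of u] ra_invf[OF M[OF lid(1)]] by (simp add: mult.assoc)
        next
          case False then show ?thesis using x Cm unfolding g_def by auto
        qed
      qed
    qed
    show "\<forall>a\<in>C. h (g a) = a"
    proof
      fix x assume x: "x \<in> C"
      show "h (g x) = x"
      proof
        fix u show "h (g x) u = x u"
        proof (cases "u \<in> S \<and> u \<noteq> \<theta>")
          case True
          then show ?thesis unfolding g_def h_def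
            using N[of u] ra_finv[OF M[OF lid(1)]] by (simp add: mult.assoc)
        next
          case False then show ?thesis using x Cm unfolding h_def by auto
        qed
      qed
    qed
    show "h ` C \<subseteq> C" unfolding h_def using Cm by auto
    show "g ` C \<subseteq> C" unfolding g_def using Cm by auto
  qed
  have add: "h (twisted_add x y) = twisted_add (h x) (h y)" for x y
    unfolding h_def twisted_add_def
    by (rule ext) (simp add: ra_add[OF M[OF lid(1)]] distrib_right)
  have mul: "h (twisted_mult S m \<theta> \<beta> \<zeta> x y) = twisted_mult S m \<theta> \<alpha> \<xi> (h x) (h y)" for x y
  proof
    fix u show "h (twisted_mult S m \<theta> \<beta> \<zeta> x y) u = twisted_mult S m \<theta> \<alpha> \<xi> (h x) (h y) u"
    proof (cases "u \<in> S \<and> u \<noteq> \<theta>")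
      case False then show ?thesis unfolding h_def twisted_mult_def by auto
    next
      case True
      have Mu: "ring_aut (\<mu> (lid u))" using M[OF lid(1)] True by simp
      have "h (twisted_mult S m \<theta> \<beta> \<zeta> x y) u =
         (\<Sum>s\<in>S - {\<theta>}. \<Sum>t\<in>S - {\<theta>}. \<mu> (lid u) (if m s t = u then x s * \<beta> s (y t) * \<zeta> s t else 0) * \<eta> u)"
        using True unfolding h_def twisted_mult_def by (simp add: ra_sum[OF Mu] sum_distrib_right)
      also have "\<dots> = (\<Sum>s\<in>S - {\<theta>}. \<Sum>t\<in>S - {\<theta>}. if m s t = u then h x s * \<alpha> s (h y t) * \<xi> s t else 0)"
      proof (rule sum.cong[OF refl], rule sum.cong[OF refl])
        fix s t assume s: "s \<in> S - {\<theta>}" and t: "t \<in> S - {\<theta>}"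
        show "\<mu> (lid u) (if m s t = u then x s * \<beta> s (y t) * \<zeta> s t else 0) * \<eta> u =
              (if m s t = u then h x s * \<alpha> s (h y t) * \<xi> s t else 0)"
        proof (cases "m s t = u")
          case False then show ?thesis using ra_0[OF Mu] by simp
        next
          case eq: True
          have "\<mu> (lid (m s t)) (x s * \<beta> s (y t) * \<zeta> s t) * \<eta> (m s t)
             = (\<mu> (lid s) (x s) * \<eta> s) * \<alpha> s (\<mu> (lid t) (y t) * \<eta> t) * \<xi> s t"
            using keyl s t eq True by blast
          then show ?thesis using eq s t unfolding h_def by simp
        qed
      qed
      also have "\<dots> = twisted_mult S m \<theta> \<alpha> \<xi> (h x) (h y) u"
        using True unfolding twisted_mult_def by simp
      finally show ?thesis .
    qed
  qed
  show ?thesis unfolding twisted_rings_iso_def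
    using bij add mul unfolding C_def by blast
qed

end



lemma iso_trans:
  assumes "twisted_rings_iso S m \<theta> \<beta> \<zeta> \<alpha>' \<xi>'" "twisted_rings_iso S m \<theta> \<alpha>' \<xi>' \<alpha> \<xi>"
  shows "twisted_rings_iso S m \<theta> \<beta> \<zeta> \<alpha> \<xi>"
proof -
  obtain h1 where h1: "bij_betw h1 (twisted_carrier S \<theta>) (twisted_carrier S \<theta>)"
    "\<forall>x\<in>twisted_carrier S \<theta>. \<forall>y\<in>twisted_carrier S \<theta>.
           h1 (twisted_add x y) = twisted_add (h1 x) (h1 y) \<and>
           h1 (twisted_mult S m \<theta> \<beta> \<zeta> x y) = twisted_mult S m \<theta> \<alpha>' \<xi>' (h1 x) (h1 y)"
    using assms(1) unfolding twisted_rings_iso_def by blast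
  obtain h2 where h2: "bij_betw h2 (twisted_carrier S \<theta>) (twisted_carrier S \<theta>)"
    "\<forall>x\<in>twisted_carrier S \<theta>. \<forall>y\<in>twisted_carrier S \<theta>.
           h2 (twisted_add x y) = twisted_add (h2 x) (h2 y) \<and>
           h2 (twisted_mult S m \<theta> \<alpha>' \<xi>' x y) = twisted_mult S m \<theta> \<alpha> \<xi> (h2 x) (h2 y)"
    using assms(2) unfolding twisted_rings_iso_def by blast
  have in1: "h1 x \<in> twisted_carrier S \<theta>" if "x \<in> twisted_carrier S \<theta>" for x
    using h1(1) that bij_betwE by blast
  show ?thesis unfolding twisted_rings_iso_def
    apply (rule exI[of _ "h2 \<circ> h1"])
    using bij_betw_trans[OF h1(1) h2(1)] h1(2) h2(2) in1 by simp
qed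

context sfs begin

lemma aut_theta: assumes "semigroup_aut S m \<phi>" shows "\<phi> \<theta> = \<theta>"
proof -
  have b: "bij_betw \<phi> S S" and h: "\<And>s t. s\<in>S \<Longrightarrow> t\<in>S \<Longrightarrow> \<phi> (m s t) = m (\<phi> s) (\<phi> t)"
    using assms unfolding semigroup_aut_def by auto
  obtain s where s: "s \<in> S" "\<phi> s = \<theta>" using b thS by (metis bij_betw_iff_bijections)
  have "\<phi> \<theta> = \<phi> (m \<theta> s)" using zl[OF s(1)] by simp
  also have "\<dots> = m (\<phi> \<theta>) \<theta>" using h[OF thS s(1)] s(2) by simp
  also have "\<dots> = \<theta>" using zr b thS bij_betwE by metis
  finally show ?thesis .
qed

lemma relabel:
  fixes \<alpha> :: "'s \<Rightarrow> 'd::division_ring \<Rightarrow> 'd" and \<xi> :: "'s \<Rightarrow> 's \<Rightarrow> 'd"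
  assumes a: "semigroup_aut S m \<phi>"
  shows "twisted_rings_iso S m \<theta> (\<lambda>s. \<alpha> (\<phi> s)) (\<lambda>s t. \<xi> (\<phi> s) (\<phi> t)) \<alpha> \<xi>"
proof -
  have b: "bij_betw \<phi> S S" and hom: "\<And>s t. s\<in>S \<Longrightarrow> t\<in>S \<Longrightarrow> \<phi> (m s t) = m (\<phi> s) (\<phi> t)"
    using a unfolding semigroup_aut_def by auto
  have pt: "\<phi> \<theta> = \<theta>" using aut_theta[OF a] .
  define \<psi> where "\<psi> = inv_into S \<phi>"
  have b1: "bij_betw \<phi> (S - {\<theta>}) (S - {\<theta>})"
    using bij_betw_DiffI[OF b, of "{\<theta>}" "{\<theta>}"] pt thS by simp
  have psiS: "\<psi> v \<in> S" "\<phi> (\<psi> v) = v" if "v \<in> S" for v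
    using that b unfolding \<psi>_def by (auto simp: bij_betw_def inv_into_into f_inv_into_f)
  have psiphi: "\<psi> (\<phi> s) = s" if "s \<in> S" for s
    using that b unfolding \<psi>_def by (simp add: bij_betw_def)
  have phiS: "\<phi> s \<in> S" if "s \<in> S" for s using that b bij_betwE by blast
  have phiinj: "\<phi> s = \<phi> t \<longleftrightarrow> s = t" if "s \<in> S" "t \<in> S" for s t
    using that b by (metis bij_betw_def inj_on_eq_iff)
  define C where "C = (twisted_carrier S \<theta> :: ('s \<Rightarrow> 'd) set)"
  have Cm: "x \<in> C \<longleftrightarrow> (\<forall>u. (u \<notin> S \<or> u = \<theta>) \<longrightarrow> x u = 0)" for x
    unfolding C_def twisted_carrier_def by simp
  define h where "h = (\<lambda>(x::'s \<Rightarrow> 'd) v. if v \<in> S \<and> v \<noteq> \<theta> then x (\<psi> v) else 0)"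
  define g where "g = (\<lambda>(y::'s \<Rightarrow> 'd) u. if u \<in> S \<and> u \<noteq> \<theta> then y (\<phi> u) else 0)"
  have bij: "bij_betw h C C"
  proof (rule bij_betw_byWitness[where f'=g])
    show "\<forall>a\<in>C. g (h a) = a"
    proof
      fix x assume x: "x \<in> C"
      show "g (h x) = x"
      proof
        fix u show "g (h x) u = x u"
          using x Cm phiS psiphi pt phiinj[OF _ thS] unfolding g_def h_def by auto
      qed
    qed
    show "\<forall>a\<in>C. h (g a) = a"
    proof
      fix x assume x: "x \<in> C"
      show "h (g x) = x"
      proof
        fix u show "h (g x) u = x u"
          using x Cm psiS pt unfolding g_def h_def by (metis)
      qed
    qed
    show "h ` C \<subseteq> C" unfolding h_def using Cm by auto
    show "g ` C \<subseteq> C" unfolding g_def using Cm by auto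
  qed
  have add: "h (twisted_add x y) = twisted_add (h x) (h y)" for x y
    unfolding h_def twisted_add_def by (rule ext) simp
  have mul: "h (twisted_mult S m \<theta> (\<lambda>s. \<alpha> (\<phi> s)) (\<lambda>s t. \<xi> (\<phi> s) (\<phi> t)) x y)
       = twisted_mult S m \<theta> \<alpha> \<xi> (h x) (h y)" for x y
  proof
    fix v show "h (twisted_mult S m \<theta> (\<lambda>s. \<alpha> (\<phi> s)) (\<lambda>s t. \<xi> (\<phi> s) (\<phi> t)) x y) v
       = twisted_mult S m \<theta> \<alpha> \<xi> (h x) (h y) v"
    proof (cases "v \<in> S \<and> v \<noteq> \<theta>")
      case False then show ?thesis unfolding h_def twisted_mult_def by auto
    next
      case True
      have pv: "\<psi> v \<in> S" "\<psi> v \<noteq> \<theta>" using psiS[of v] True pt by auto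
      have "twisted_mult S m \<theta> \<alpha> \<xi> (h x) (h y) v =
          (\<Sum>s'\<in>S - {\<theta>}. \<Sum>t'\<in>S - {\<theta>}. if m s' t' = v then h x s' * \<alpha> s' (h y t') * \<xi> s' t' else 0)"
        using True unfolding twisted_mult_def by simp
      also have "\<dots> = (\<Sum>s\<in>S - {\<theta>}. \<Sum>t'\<in>S - {\<theta>}. if m (\<phi> s) t' = v then h x (\<phi> s) * \<alpha> (\<phi> s) (h y t') * \<xi> (\<phi> s) t' else 0)"
        by (rule sum.reindex_bij_betw[OF b1, symmetric])
      also have "\<dots> = (\<Sum>s\<in>S - {\<theta>}. \<Sum>t\<in>S - {\<theta>}. if m (\<phi> s) (\<phi> t) = v then h x (\<phi> s) * \<alpha> (\<phi> s) (h y (\<phi> t)) * \<xi> (\<phi> s) (\<phi> t) else 0)"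
        by (rule sum.cong[OF refl], rule sum.reindex_bij_betw[OF b1, symmetric])
      also have "\<dots> = (\<Sum>s\<in>S - {\<theta>}. \<Sum>t\<in>S - {\<theta>}. if m s t = \<psi> v then x s * \<alpha> (\<phi> s) (y t) * \<xi> (\<phi> s) (\<phi> t) else 0)"
      proof (rule sum.cong[OF refl], rule sum.cong[OF refl])
        fix s t assume s: "s \<in> S - {\<theta>}" and t: "t \<in> S - {\<theta>}"
        have e1: "m (\<phi> s) (\<phi> t) = v \<longleftrightarrow> m s t = \<psi> v"
          using hom[of s t] s t phiinj[OF cl pv(1), of s t] psiS[of v] True by auto
        have e2: "h x (\<phi> s) = x s" "h y (\<phi> t) = y t"
          using s t phiS psiphi pt phiinj[OF _ thS] unfolding h_def by auto
        show "(if m (\<phi> s) (\<phi> t) = v then h x (\<phi> s) * \<alpha> (\<phi> s) (h y (\<phi> t)) * \<xi> (\<phi> s) (\<phi> t) else 0) =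
              (if m s t = \<psi> v then x s * \<alpha> (\<phi> s) (y t) * \<xi> (\<phi> s) (\<phi> t) else 0)"
          using e1 e2 by simp
      qed
      also have "\<dots> = h (twisted_mult S m \<theta> (\<lambda>s. \<alpha> (\<phi> s)) (\<lambda>s t. \<xi> (\<phi> s) (\<phi> t)) x y) v"
        using True pv unfolding h_def twisted_mult_def by simp
      finally show ?thesis by simp
    qed
  qed
  show ?thesis unfolding twisted_rings_iso_def
    using bij add mul unfolding C_def by blast
qed

end



context sfs begin

lemma normalize:
  fixes \<alpha> :: "'s \<Rightarrow> 'd::division_ring \<Rightarrow> 'd" and \<xi> :: "'s \<Rightarrow> 's \<Rightarrow> 'd"
  assumes c1: "cocycle2 S m \<theta> \<alpha> \<xi>"
  shows "\<exists>\<beta>' \<zeta>'. cocycle2 S m \<theta> \<beta>' \<zeta>' \<and> normal_cocycle E \<beta>' \<zeta>' \<and>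
            twisted_rings_iso S m \<theta> \<beta>' \<zeta>' \<alpha> \<xi>"
proof -
  have CA: "\<And>s. s\<in>S \<Longrightarrow> s\<noteq>\<theta> \<Longrightarrow> ring_aut (\<alpha> s)"
    using c1 unfolding cocycle2_def by blast
  have CX: "\<And>s t. s\<in>S \<Longrightarrow> t\<in>S \<Longrightarrow> m s t \<noteq> \<theta> \<Longrightarrow> \<xi> s t \<noteq> 0"
    using c1 unfolding cocycle2_def by blast
  have CC: "\<And>s t u. s\<in>S \<Longrightarrow> t\<in>S \<Longrightarrow> u\<in>S \<Longrightarrow> m (m s t) u \<noteq> \<theta> \<Longrightarrow>
         \<alpha> s (\<xi> t u) * \<xi> s (m t u) = \<xi> s t * \<xi> (m s t) u"
    using c1 unfolding cocycle2_def by blast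
  have CR0: "\<And>s t. s\<in>S \<Longrightarrow> t\<in>S \<Longrightarrow> m s t \<noteq> \<theta> \<Longrightarrow> \<alpha> s \<circ> \<alpha> t = rho (\<xi> s t) \<circ> \<alpha> (m s t)"
    using c1 unfolding cocycle2_def by blast
  have CR: "\<alpha> s (\<alpha> t x) = \<xi> s t * \<alpha> (m s t) x * inverse (\<xi> s t)"
    if "s\<in>S" "t\<in>S" "m s t \<noteq> \<theta>" for s t x
    using fun_cong[OF CR0[OF that], of x] unfolding rho_def by simp
  define \<eta> where "\<eta> = (\<lambda>s. if s \<in> E then inverse (\<xi> s s) else 1)"
  have N: "\<eta> s \<noteq> 0" for s
    using CX[OF ES ES] idem Ene unfolding \<eta>_def by auto
  define \<beta> where "\<beta> = (\<lambda>s x. \<eta> s * \<alpha> s x * inverse (\<eta> s))"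
  define \<zeta> where "\<zeta> = (\<lambda>s t. \<eta> s * \<alpha> s (\<eta> t) * \<xi> s t * inverse (\<eta> (m s t)))"
  have iso: "twisted_rings_iso S m \<theta> \<beta> \<zeta> \<alpha> \<xi>"
  proof (rule iso_core[where \<mu>="\<lambda>_. id" and \<eta>=\<eta>])
    show "\<And>s. s \<in> S \<Longrightarrow> s \<noteq> \<theta> \<Longrightarrow> ring_aut (\<alpha> s)" by (rule CA)
    show "\<And>e. e \<in> E \<Longrightarrow> ring_aut id" by (rule ra_id)
    show "\<And>s. s \<in> S \<Longrightarrow> s \<noteq> \<theta> \<Longrightarrow> \<eta> s \<noteq> 0" using N by blast
    show "\<And>s e f. s \<in> S \<Longrightarrow> e \<in> E \<Longrightarrow> f \<in> E \<Longrightarrow> s \<noteq> \<theta> \<Longrightarrow> m (m e s) f = s \<Longrightarrow>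
        id \<circ> \<beta> s \<circ> inv id = rho (\<eta> s) \<circ> \<alpha> s"
      unfolding \<beta>_def rho_def by (auto simp: inv_id)
    show "\<And>s t e f g. id (\<zeta> s t) = \<eta> s * \<alpha> s (\<eta> t) * \<xi> s t * inverse (\<eta> (m s t))"
      unfolding \<zeta>_def by simp
  qed
  have nz: "\<zeta> s t \<noteq> 0" if "s\<in>S" "t\<in>S" "m s t \<noteq> \<theta>" for s t
  proof -
    have "\<alpha> s (\<eta> t) \<noteq> 0" using ra_ne0[OF CA N] that prod_ne by blast
    then show ?thesis unfolding \<zeta>_def using N CX[OF that] by simp
  qed
  have coc3: "\<beta> s (\<zeta> t u) * \<zeta> s (m t u) = \<zeta> s t * \<zeta> (m s t) u"
    if s: "s\<in>S" and t: "t\<in>S" and u: "u\<in>S" and stu: "m (m s t) u \<noteq> \<theta>" for s t u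
  proof -
    have st: "m s t \<noteq> \<theta>" using stu zl u by auto
    have tu: "m t u \<noteq> \<theta>" using stu assoc[OF s t u] zr s by auto
    have stS: "m s t \<in> S" and tuS: "m t u \<in> S" using cl s t u by auto
    have sn: "s \<noteq> \<theta>" using prod_ne[OF s t st] by simp
    note As = CA[OF s sn]
    have Ast: "ring_aut (\<alpha> (m s t))" using CA[OF stS st] .
    have ass: "m s (m t u) = m (m s t) u" using assoc[OF s t u] by simp
    define a where "a = \<eta> s"
    define p where "p = \<eta> (m s t)"
    define r where "r = \<eta> (m (m s t) u)"
    define q where "q = \<eta> (m t u)"
    define X where "X = \<xi> s t"
    define Y where "Y = \<xi> (m s t) u"
    define Z where "Z = \<xi> t u"
    define W where "W = \<xi> s (m t u)"
    have aq: "\<alpha> s q \<noteq> 0" using ra_ne0[OF As N] unfolding q_def by blast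
    have X0: "X \<noteq> 0" using CX[OF s t st] unfolding X_def .
    have a0: "a \<noteq> 0" and p0: "p \<noteq> 0" using N unfolding a_def p_def by auto
    have cc: "\<alpha> s Z * (W * w) = X * (Y * w)" for w
      using CC[OF s t u stu] unfolding X_def Y_def Z_def W_def by (simp add: mult.assoc[symmetric])
    have cr: "\<alpha> s (\<alpha> t (\<eta> u)) = X * \<alpha> (m s t) (\<eta> u) * inverse X"
      using CR[OF s t st] unfolding X_def by simp
    have "\<beta> s (\<zeta> t u) * \<zeta> s (m t u) =
        a * (\<alpha> s (\<eta> t) * \<alpha> s (\<alpha> t (\<eta> u)) * \<alpha> s Z * inverse (\<alpha> s q)) * inverse a * (a * \<alpha> s q * W * inverse r)"
      unfolding \<beta>_def \<zeta>_def a_def q_def Z_def W_def r_def ass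
      by (simp add: ra_mult[OF As] ra_inverse[OF As])
    also have "\<dots> = a * \<alpha> s (\<eta> t) * X * \<alpha> (m s t) (\<eta> u) * Y * inverse r"
      unfolding cr using aq X0 a0 by (simp add: mult.assoc cancel1 cancel2 cc)
    also have "\<dots> = \<zeta> s t * \<zeta> (m s t) u"
      unfolding \<zeta>_def a_def X_def Y_def r_def using p0 unfolding p_def by (simp add: mult.assoc cancel2)
    finally show ?thesis .
  qed
  have coc4: "\<beta> s \<circ> \<beta> t = rho (\<zeta> s t) \<circ> \<beta> (m s t)"
    if s: "s\<in>S" and t: "t\<in>S" and st: "m s t \<noteq> \<theta>" for s t
  proof
    fix x
    have sn: "s \<noteq> \<theta>" using prod_ne[OF s t st] by simp
    note As = CA[OF s sn]
    define a where "a = \<eta> s"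
    define b where "b = \<alpha> s (\<eta> t)"
    define p where "p = \<eta> (m s t)"
    define X where "X = \<xi> s t"
    have b0: "b \<noteq> 0" using ra_ne0[OF As N] unfolding b_def by blast
    have X0: "X \<noteq> 0" using CX[OF s t st] unfolding X_def .
    have a0: "a \<noteq> 0" and p0: "p \<noteq> 0" using N unfolding a_def p_def by auto
    have "(\<beta> s \<circ> \<beta> t) x = a * (b * (X * \<alpha> (m s t) x * inverse X) * inverse b) * inverse a"
      unfolding \<beta>_def a_def b_def X_def using CR[OF s t st]
      by (simp add: ra_mult[OF As] ra_inverse[OF As])
    also have "\<dots> = (a * b * X * inverse p) * (p * \<alpha> (m s t) x * inverse p) * inverse (a * b * X * inverse p)"
      using a0 b0 X0 p0 by (simp add: nonzero_inverse_mult_distrib mult.assoc cancel1 cancel2)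
    also have "\<dots> = (rho (\<zeta> s t) \<circ> \<beta> (m s t)) x"
      unfolding rho_def \<beta>_def \<zeta>_def a_def b_def X_def p_def by simp
    finally show "(\<beta> s \<circ> \<beta> t) x = (rho (\<zeta> s t) \<circ> \<beta> (m s t)) x" .
  qed
  have coc: "cocycle2 S m \<theta> \<beta> \<zeta>"
    unfolding cocycle2_def
  proof (intro conjI ballI impI)
    fix s assume "s \<in> S" "s \<noteq> \<theta>"
    then show "ring_aut (\<beta> s)" unfolding \<beta>_def using ra_conj[OF CA N] by blast
  next
    fix s t assume "s \<in> S" "t \<in> S" "m s t \<noteq> \<theta>" then show "\<zeta> s t \<noteq> 0" by (rule nz)
  next
    fix s t u assume "s \<in> S" "t \<in> S" "u \<in> S" "m (m s t) u \<noteq> \<theta>"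
    then show "\<beta> s (\<zeta> t u) * \<zeta> s (m t u) = \<zeta> s t * \<zeta> (m s t) u" by (rule coc3)
  next
    fix s t assume "s \<in> S" "t \<in> S" "m s t \<noteq> \<theta>"
    then show "\<beta> s \<circ> \<beta> t = rho (\<zeta> s t) \<circ> \<beta> (m s t)" by (rule coc4)
  qed
  have norm: "normal_cocycle E \<beta> \<zeta>"
    unfolding normal_cocycle_def
  proof (intro ballI conjI)
    fix e assume e: "e \<in> E"
    have eS: "e \<in> S" and ee: "m e e = e" and en: "e \<noteq> \<theta>" using ES Ene idem e by auto
    note Ae = CA[OF eS en]
    define k where "k = \<xi> e e"
    have k0: "k \<noteq> 0" using CX[OF eS eS] ee en unfolding k_def by simp
    have ae: "\<alpha> e x = k * x * inverse k" for x
    proof -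
      have "\<alpha> e (\<alpha> e (inv (\<alpha> e) x)) = k * \<alpha> e (inv (\<alpha> e) x) * inverse k"
        using CR[OF eS eS] ee en unfolding k_def by simp
      then show ?thesis using ra_finv[OF Ae] by simp
    qed
    have he: "\<eta> e = inverse k" using e unfolding \<eta>_def k_def by simp
    show "\<beta> e = id"
    proof
      fix x show "\<beta> e x = id x"
        unfolding \<beta>_def he ae using k0 by (simp add: mult.assoc cancel1 cancel2)
    qed
    show "\<zeta> e e = 1"
      unfolding \<zeta>_def ee he ae k_def[symmetric] using k0 by (simp add: mult.assoc cancel1 cancel2)
  qed
  show ?thesis using coc norm iso by blast
qed

end


theorem mainTheorem1:
  fixes S :: "'s set" and m :: "'s \<Rightarrow> 's \<Rightarrow> 's" and \<theta> :: 's and E :: "'s set"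
    and \<alpha> \<beta> :: "'s \<Rightarrow> 'd::division_ring \<Rightarrow> 'd" and \<xi> \<zeta> :: "'s \<Rightarrow> 's \<Rightarrow> 'd"
  assumes sf: "square_free_semigroup S m \<theta> E"
    and c1: "cocycle2 S m \<theta> \<alpha> \<xi>"
    and c2: "cocycle2 S m \<theta> \<beta> \<zeta>"
  shows "(\<forall>\<phi>. semigroup_aut S m \<phi> \<and>
            thin_cohomologous S m \<theta> E \<beta> \<zeta> (\<lambda>s. \<alpha> (\<phi> s)) (\<lambda>s t. \<xi> (\<phi> s) (\<phi> t))
          \<longrightarrow> twisted_rings_iso S m \<theta> \<beta> \<zeta> \<alpha> \<xi>)
       \<and> (\<exists>\<beta>' \<zeta>'. cocycle2 S m \<theta> \<beta>' \<zeta>' \<and> normal_cocycle E \<beta>' \<zeta>' \<and>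
            twisted_rings_iso S m \<theta> \<beta>' \<zeta>' \<alpha> \<xi>)"
proof
  interpret sfs S m \<theta> E by (rule sfs.intro[OF sf])
  show "\<forall>\<phi>. semigroup_aut S m \<phi> \<and>
            thin_cohomologous S m \<theta> E \<beta> \<zeta> (\<lambda>s. \<alpha> (\<phi> s)) (\<lambda>s t. \<xi> (\<phi> s) (\<phi> t))
          \<longrightarrow> twisted_rings_iso S m \<theta> \<beta> \<zeta> \<alpha> \<xi>"
  proof (intro allI impI, elim conjE)
    fix \<phi> assume a: "semigroup_aut S m \<phi>"
      and tc: "thin_cohomologous S m \<theta> E \<beta> \<zeta> (\<lambda>s. \<alpha> (\<phi> s)) (\<lambda>s t. \<xi> (\<phi> s) (\<phi> t))"
    obtain \<mu> \<eta> where ca: "cohom_act S m \<theta> E \<mu> \<eta> (\<lambda>s. \<alpha> (\<phi> s)) (\<lambda>s t. \<xi> (\<phi> s) (\<phi> t)) \<beta> \<zeta>"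
      using tc unfolding thin_cohomologous_def by blast
    have b: "bij_betw \<phi> S S" using a unfolding semigroup_aut_def by simp
    have pt: "\<phi> \<theta> = \<theta>" using aut_theta[OF a] .
    have CA: "\<And>s. s\<in>S \<Longrightarrow> s\<noteq>\<theta> \<Longrightarrow> ring_aut (\<alpha> s)"
      using c1 unfolding cocycle2_def by blast
    have A: "ring_aut (\<alpha> (\<phi> s))" if "s \<in> S" "s \<noteq> \<theta>" for s
    proof -
      have "\<phi> s \<in> S" using b that bij_betwE by blast
      moreover have "\<phi> s \<noteq> \<theta>" using b that pt thS by (metis bij_betw_def inj_on_eq_iff)
      ultimately show ?thesis using CA by blast
    qed
    have iso1: "twisted_rings_iso S m \<theta> \<beta> \<zeta> (\<lambda>s. \<alpha> (\<phi> s)) (\<lambda>s t. \<xi> (\<phi> s) (\<phi> t))"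
    proof (rule iso_core[where \<mu>=\<mu> and \<eta>=\<eta>])
      show "\<And>s. s \<in> S \<Longrightarrow> s \<noteq> \<theta> \<Longrightarrow> ring_aut (\<alpha> (\<phi> s))" by (rule A)
      show "\<And>e. e \<in> E \<Longrightarrow> ring_aut (\<mu> e)" using ca unfolding cohom_act_def by blast
      show "\<And>s. s \<in> S \<Longrightarrow> s \<noteq> \<theta> \<Longrightarrow> \<eta> s \<noteq> 0" using ca unfolding cohom_act_def by blast
      show "\<And>s e f. s \<in> S \<Longrightarrow> e \<in> E \<Longrightarrow> f \<in> E \<Longrightarrow> s \<noteq> \<theta> \<Longrightarrow> m (m e s) f = s \<Longrightarrow>
          \<mu> e \<circ> \<beta> s \<circ> inv (\<mu> f) = rho (\<eta> s) \<circ> \<alpha> (\<phi> s)"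
        using ca unfolding cohom_act_def by blast
      show "\<And>s t e f g. s \<in> S \<Longrightarrow> t \<in> S \<Longrightarrow> e \<in> E \<Longrightarrow> f \<in> E \<Longrightarrow> g \<in> E \<Longrightarrow>
          m (m e s) f = s \<Longrightarrow> m (m f t) g = t \<Longrightarrow> s \<noteq> \<theta> \<Longrightarrow> t \<noteq> \<theta> \<Longrightarrow> m s t \<noteq> \<theta> \<Longrightarrow>
          \<mu> e (\<zeta> s t) = \<eta> s * \<alpha> (\<phi> s) (\<eta> t) * \<xi> (\<phi> s) (\<phi> t) * inverse (\<eta> (m s t))"
        using ca unfolding cohom_act_def by blast
    qed
    show "twisted_rings_iso S m \<theta> \<beta> \<zeta> \<alpha> \<xi>"
      using iso_trans[OF iso1 relabel[OF a]] .
  qed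
  show "\<exists>\<beta>' \<zeta>'. cocycle2 S m \<theta> \<beta>' \<zeta>' \<and> normal_cocycle E \<beta>' \<zeta>' \<and>
            twisted_rings_iso S m \<theta> \<beta>' \<zeta>' \<alpha> \<xi>"
    using normalize[OF c1] .
qed

end
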